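(* Let $(\Phi,D)$ be a domain-free information algebra whose lattice $D$ has a top element. (1) $(\Phi,D)$ is continuous (resp. compact) if and only if $(\Phi,\le)$ is a continuous lattice (resp. an algebraic lattice). (2) $(\Phi,D)$ is s-continuous if and only if $(\Phi,\le)$ is a complete lattice and for all $\phi\in\Phi$ and $x\in D$, $\phi^{\Rightarrow x}=\vee\{\psi\in\Phi:\psi=\psi^{\Rightarrow x}\ll\phi\}$; and $(\Phi,D)$ is s-compact if and only if $(\Phi,\le)$ is a complete lattice and for all $\phi\in\Phi$ and $x\in D$, $\phi^{\Rightarrow x}=\vee\{\psi\in\Phi_f:\psi=\psi^{\Rightarrow x}\le\phi\}$.
   Context: A domain-free information algebra $(\Phi,D)$ consists of a set $\Phi$, a lattice $D$, a combination $\otimes:\Phi\times\Phi\to\Phi$ and a focusing $\Phi\times D\to\Phi$, $(\psi,x)\mapsto\psi^{\Rightarrow x}$, such that: (1) $\otimes$ is associative and commutative and has a neutral element $e$; (2) $(\psi^{\Rightarrow y})^{\Rightarrow x}=\psi^{\Rightarrow x\wedge y}$; (3) $(\phi^{\Rightarrow x}\otimes\psi)^{\Rightarrow x}=\phi^{\Rightarrow x}\otimes\psi^{\Rightarrow x}$; (4) for every $\psi$ there is $x\in D$ with $\psi^{\Rightarrow x}=\psi$; (5) $\psi\otimes\psi^{\Rightarrow x}=\psi$. $\Phi$ is ordered by $\psi\le\phi$ iff $\psi\otimes\phi=\phi$; suprema are with respect to this order. $a\ll b$ means: for every directed $X$ with $b\le\vee X$ there is $c\in X$ with $a\le c$; $\Phi_f=\{\phi\in\Phi:\phi\ll\phi\}$.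 A complete lattice $L$ is continuous if $a=\vee\{b:b\ll a\}$ for all $a$, and algebraic if $a=\vee\{b:b\ll b\le a\}$ for all $a$. $(\Phi,D)$ is called continuous (resp. s-continuous) if there is $\Gamma\subseteq\Phi$, closed under combination and containing $e$, such that (convergency) every directed $X\subseteq\Gamma$ has a supremum in $\Phi$, and (density) $\phi=\vee\{\psi\in\Gamma:\psi\ll\phi\}$ for all $\phi$ (resp. (strong density) $\phi^{\Rightarrow x}=\vee\{\psi\in\Gamma:\psi=\psi^{\Rightarrow x}\ll\phi\}$ for all $\phi,x$). It is called compact (resp. s-compact) if such a $\Gamma$ additionally satisfies (compactness): for every directed $X\subseteq\Gamma$ and $\phi\in\Gamma$ with $\phi\le\vee X$ there is $\psi\in X$ with $\phi\le\psi$. *)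

theory Defs
  imports Main
begin

text \<open>The carrier \<Phi> is the whole type 'a, D is the lattice type 'd,
  comb is the combination, e the neutral element, foc the focusing
  (foc \<psi> x stands for \<psi> focused on x).\<close>

definition info_algebra ::
  "('a \<Rightarrow> 'a \<Rightarrow> 'a) \<Rightarrow> 'a \<Rightarrow> ('a \<Rightarrow> 'd::lattice \<Rightarrow> 'a) \<Rightarrow> bool" where
  "info_algebra comb e foc \<longleftrightarrow>
     (\<forall>a b c. comb (comb a b) c = comb a (comb b c)) \<and>
     (\<forall>a b. comb a b = comb b a) \<and>
     (\<forall>a. comb a e = a) \<and>
     (\<forall>\<psi> x y. foc (foc \<psi> y) x = foc \<psi> (inf x y)) \<and>
     (\<forall>\<phi> \<psi> x. foc (comb (foc \<phi> x) \<psi>) x = comb (foc \<phi> x) (foc \<psi> x)) \<and>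
     (\<forall>\<psi>. \<exists>x. foc \<psi> x = \<psi>) \<and>
     (\<forall>\<psi> x. comb \<psi> (foc \<psi> x) = \<psi>)"

definition ia_le :: "('a \<Rightarrow> 'a \<Rightarrow> 'a) \<Rightarrow> 'a \<Rightarrow> 'a \<Rightarrow> bool" where
  "ia_le comb \<psi> \<phi> \<longleftrightarrow> comb \<psi> \<phi> = \<phi>"

definition partial_ord :: "('a \<Rightarrow> 'a \<Rightarrow> bool) \<Rightarrow> bool" where
  "partial_ord le \<longleftrightarrow> (\<forall>a. le a a) \<and> (\<forall>a b. le a b \<and> le b a \<longrightarrow> a = b)
     \<and> (\<forall>a b c. le a b \<and> le b c \<longrightarrow> le a c)"

definition is_lub :: "('a \<Rightarrow> 'a \<Rightarrow> bool) \<Rightarrow> 'a set \<Rightarrow> 'a \<Rightarrow> bool" where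
  "is_lub le X s \<longleftrightarrow> (\<forall>x\<in>X. le x s) \<and> (\<forall>u. (\<forall>x\<in>X. le x u) \<longrightarrow> le s u)"

definition has_lub :: "('a \<Rightarrow> 'a \<Rightarrow> bool) \<Rightarrow> 'a set \<Rightarrow> bool" where
  "has_lub le X \<longleftrightarrow> (\<exists>s. is_lub le X s)"

definition directed :: "('a \<Rightarrow> 'a \<Rightarrow> bool) \<Rightarrow> 'a set \<Rightarrow> bool" where
  "directed le X \<longleftrightarrow> X \<noteq> {} \<and> (\<forall>a\<in>X. \<forall>b\<in>X. \<exists>c\<in>X. le a c \<and> le b c)"

definition way_below :: "('a \<Rightarrow> 'a \<Rightarrow> bool) \<Rightarrow> 'a \<Rightarrow> 'a \<Rightarrow> bool" where
  "way_below le a b \<longleftrightarrow>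
     (\<forall>X s. directed le X \<and> is_lub le X s \<and> le b s \<longrightarrow> (\<exists>c\<in>X. le a c))"

definition complete_lat :: "('a \<Rightarrow> 'a \<Rightarrow> bool) \<Rightarrow> bool" where
  "complete_lat le \<longleftrightarrow> partial_ord le \<and> (\<forall>X. has_lub le X)"

definition continuous_lat :: "('a \<Rightarrow> 'a \<Rightarrow> bool) \<Rightarrow> bool" where
  "continuous_lat le \<longleftrightarrow> complete_lat le \<and> (\<forall>a. is_lub le {b. way_below le b a} a)"

definition algebraic_lat :: "('a \<Rightarrow> 'a \<Rightarrow> bool) \<Rightarrow> bool" where
  "algebraic_lat le \<longleftrightarrow> complete_lat le \<and>
     (\<forall>a. is_lub le {b. way_below le b b \<and> le b a} a)"

definition admissible_gen :: "('a \<Rightarrow> 'a \<Rightarrow> 'a) \<Rightarrow> 'a \<Rightarrow> 'a set \<Rightarrow> bool" where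
  "admissible_gen comb e \<Gamma> \<longleftrightarrow> e \<in> \<Gamma> \<and> (\<forall>a\<in>\<Gamma>. \<forall>b\<in>\<Gamma>. comb a b \<in> \<Gamma>)"

definition convergency :: "('a \<Rightarrow> 'a \<Rightarrow> 'a) \<Rightarrow> 'a set \<Rightarrow> bool" where
  "convergency comb \<Gamma> \<longleftrightarrow>
     (\<forall>X. X \<subseteq> \<Gamma> \<and> directed (ia_le comb) X \<longrightarrow> has_lub (ia_le comb) X)"

definition density :: "('a \<Rightarrow> 'a \<Rightarrow> 'a) \<Rightarrow> 'a set \<Rightarrow> bool" where
  "density comb \<Gamma> \<longleftrightarrow>
     (\<forall>\<phi>. is_lub (ia_le comb) {\<psi>\<in>\<Gamma>. way_below (ia_le comb) \<psi> \<phi>} \<phi>)"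

definition strong_density ::
  "('a \<Rightarrow> 'a \<Rightarrow> 'a) \<Rightarrow> ('a \<Rightarrow> 'd \<Rightarrow> 'a) \<Rightarrow> 'a set \<Rightarrow> bool" where
  "strong_density comb foc \<Gamma> \<longleftrightarrow>
     (\<forall>\<phi> x. is_lub (ia_le comb)
        {\<psi>\<in>\<Gamma>. \<psi> = foc \<psi> x \<and> way_below (ia_le comb) \<psi> \<phi>} (foc \<phi> x))"

definition compactness :: "('a \<Rightarrow> 'a \<Rightarrow> 'a) \<Rightarrow> 'a set \<Rightarrow> bool" where
  "compactness comb \<Gamma> \<longleftrightarrow>
     (\<forall>X \<phi> s. X \<subseteq> \<Gamma> \<and> directed (ia_le comb) X \<and> \<phi> \<in> \<Gamma> \<and>
        is_lub (ia_le comb) X s \<and> ia_le comb \<phi> s \<longrightarrow> (\<exists>\<psi>\<in>X. ia_le comb \<phi> \<psi>))"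

definition continuous_IA :: "('a \<Rightarrow> 'a \<Rightarrow> 'a) \<Rightarrow> 'a \<Rightarrow> bool" where
  "continuous_IA comb e \<longleftrightarrow>
     (\<exists>\<Gamma>. admissible_gen comb e \<Gamma> \<and> convergency comb \<Gamma> \<and> density comb \<Gamma>)"

definition s_continuous_IA :: "('a \<Rightarrow> 'a \<Rightarrow> 'a) \<Rightarrow> 'a \<Rightarrow> ('a \<Rightarrow> 'd \<Rightarrow> 'a) \<Rightarrow> bool" where
  "s_continuous_IA comb e foc \<longleftrightarrow>
     (\<exists>\<Gamma>. admissible_gen comb e \<Gamma> \<and> convergency comb \<Gamma> \<and> strong_density comb foc \<Gamma>)"

definition compact_IA :: "('a \<Rightarrow> 'a \<Rightarrow> 'a) \<Rightarrow> 'a \<Rightarrow> bool" where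
  "compact_IA comb e \<longleftrightarrow>
     (\<exists>\<Gamma>. admissible_gen comb e \<Gamma> \<and> convergency comb \<Gamma> \<and> density comb \<Gamma>
          \<and> compactness comb \<Gamma>)"

definition s_compact_IA :: "('a \<Rightarrow> 'a \<Rightarrow> 'a) \<Rightarrow> 'a \<Rightarrow> ('a \<Rightarrow> 'd \<Rightarrow> 'a) \<Rightarrow> bool" where
  "s_compact_IA comb e foc \<longleftrightarrow>
     (\<exists>\<Gamma>. admissible_gen comb e \<Gamma> \<and> convergency comb \<Gamma> \<and> strong_density comb foc \<Gamma>
          \<and> compactness comb \<Gamma>)"

end

theory Submission
  imports Defs
begin

locale IA =
  fixes comb :: "'a \<Rightarrow> 'a \<Rightarrow> 'a" and e :: 'a
    and foc :: "'a \<Rightarrow> 'd::bounded_lattice_top \<Rightarrow> 'a"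
  assumes ia: "info_algebra comb e foc"
begin

abbreviation le where "le \<equiv> ia_le comb"

lemma assoc: "comb (comb a b) c = comb a (comb b c)" using ia unfolding info_algebra_def by blast
lemma commute: "comb a b = comb b a" using ia unfolding info_algebra_def by blast
lemma neut: "comb a e = a" using ia unfolding info_algebra_def by blast
lemma foc_foc: "foc (foc \<psi> y) x = foc \<psi> (inf x y)" using ia unfolding info_algebra_def by blast
lemma foc_comb: "foc (comb (foc \<phi> x) \<psi>) x = comb (foc \<phi> x) (foc \<psi> x)" using ia unfolding info_algebra_def by blast
lemma foc_ex: "\<exists>x. foc \<psi> x = \<psi>" using ia unfolding info_algebra_def by blast
lemma comb_foc: "comb \<psi> (foc \<psi> x) = \<psi>" using ia unfolding info_algebra_def by blast

lemma idem: "comb a a = a"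
proof -
  obtain x where "foc a x = a" using foc_ex by blast
  then show ?thesis using comb_foc[of a x] by simp
qed

lemma refl: "le a a" unfolding ia_le_def by (rule idem)
lemma antisym: "le a b \<Longrightarrow> le b a \<Longrightarrow> a = b" unfolding ia_le_def by (metis commute)
lemma trans: "le a b \<Longrightarrow> le b c \<Longrightarrow> le a c" unfolding ia_le_def by (metis assoc)
lemma po: "partial_ord le" unfolding partial_ord_def using refl antisym trans by blast

lemma le_comb1: "le a (comb a b)" unfolding ia_le_def by (metis assoc idem)
lemma le_comb2: "le b (comb a b)" using le_comb1 commute by metis
lemma comb_least: "le a c \<Longrightarrow> le b c \<Longrightarrow> le (comb a b) c" unfolding ia_le_def by (metis assoc)
lemma e_least: "le e a" unfolding ia_le_def by (metis commute neut)

lemma lub_single: "is_lub le {b} b" unfolding is_lub_def using refl by blast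
lemma dir_single: "directed le {b}" unfolding directed_def using refl by blast

lemma wb_le: "way_below le a b \<Longrightarrow> le a b"
proof -
  assume "way_below le a b"
  then have "\<exists>c\<in>{b}. le a c" unfolding way_below_def using lub_single dir_single refl by blast
  then show ?thesis by simp
qed

lemma wb_mono: "way_below le a b \<Longrightarrow> le b c \<Longrightarrow> way_below le a c"
  unfolding way_below_def by (meson trans)

lemma le_wb: "le a b \<Longrightarrow> way_below le b c \<Longrightarrow> way_below le a c"
  unfolding way_below_def by (meson trans)

lemma wb_comb: "way_below le a c \<Longrightarrow> way_below le b c \<Longrightarrow> way_below le (comb a b) c"
  unfolding way_below_def
proof (intro allI impI)
  fix X s assume A: "\<forall>X s. directed le X \<and> is_lub le X s \<and> le c s \<longrightarrow> (\<exists>c\<in>X. le a c)"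
    and B: "\<forall>X s. directed le X \<and> is_lub le X s \<and> le c s \<longrightarrow> (\<exists>c\<in>X. le b c)"
    and H: "directed le X \<and> is_lub le X s \<and> le c s"
  from A H obtain x1 where "x1 \<in> X" "le a x1" by blast
  from B H obtain x2 where "x2 \<in> X" "le b x2" by blast
  from H \<open>x1 \<in> X\<close> \<open>x2 \<in> X\<close> obtain x3 where "x3 \<in> X" "le x1 x3" "le x2 x3"
    unfolding directed_def by blast
  then have "le (comb a b) x3" using \<open>le a x1\<close> \<open>le b x2\<close> comb_least trans by blast
  then show "\<exists>c\<in>X. le (comb a b) c" using \<open>x3 \<in> X\<close> by blast
qed

lemma e_wb: "way_below le e a"
proof -
  have "\<exists>c\<in>X. le e c" if "directed le X" for X
  proof -
    from that obtain x where "x \<in> X" unfolding directed_def by blast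
    then show ?thesis using e_least by blast
  qed
  then show ?thesis unfolding way_below_def by blast
qed

lemma compact_comb: "way_below le a a \<Longrightarrow> way_below le b b \<Longrightarrow> way_below le (comb a b) (comb a b)"
  by (meson le_comb1 le_comb2 wb_comb wb_mono)

lemma lub_enlarge: "is_lub le A s \<Longrightarrow> A \<subseteq> B \<Longrightarrow> \<forall>b\<in>B. le b s \<Longrightarrow> is_lub le B s"
  unfolding is_lub_def by blast

lemma foc_le: "le (foc \<psi> x) \<psi>" unfolding ia_le_def by (metis commute comb_foc)

lemma foc_mono: "le \<psi> \<phi> \<Longrightarrow> le (foc \<psi> x) (foc \<phi> x)"
proof -
  assume "le \<psi> \<phi>"
  then have "le (foc \<psi> x) \<phi>" using foc_le trans by blast
  then have "comb (foc \<psi> x) \<phi> = \<phi>" unfolding ia_le_def .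
  then have "foc \<phi> x = comb (foc \<psi> x) (foc \<phi> x)" using foc_comb[of \<psi> x \<phi>] by simp
  then show ?thesis unfolding ia_le_def by simp
qed

lemma foc_top: "foc \<psi> top = \<psi>"
proof -
  obtain x where "foc \<psi> x = \<psi>" using foc_ex by blast
  then show ?thesis using foc_foc[of \<psi> x top] by simp
qed

lemma complete_from_density:
  assumes adm: "admissible_gen comb e \<Gamma>" and conv: "convergency comb \<Gamma>"
    and dens: "density comb \<Gamma>"
  shows "complete_lat le"
  unfolding complete_lat_def
proof (intro conjI allI po)
  fix X
  define F where "F = {\<psi>\<in>\<Gamma>. \<forall>u. (\<forall>x\<in>X. le x u) \<longrightarrow> le \<psi> u}"
  have eF: "e \<in> F" using adm e_least unfolding F_def admissible_gen_def by blast
  have cF: "comb a b \<in> F" if "a \<in> F" "b \<in> F" for a b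
    using that adm comb_least unfolding F_def admissible_gen_def by blast
  have "directed le F" unfolding directed_def using eF cF le_comb1 le_comb2 by blast
  moreover have "F \<subseteq> \<Gamma>" unfolding F_def by blast
  ultimately obtain s where s: "is_lub le F s"
    using conv unfolding convergency_def has_lub_def by blast
  have "is_lub le X s"
    unfolding is_lub_def
  proof (intro conjI ballI allI impI)
    fix x assume xX: "x \<in> X"
    have d: "is_lub le {\<psi>\<in>\<Gamma>. way_below le \<psi> x} x" using dens unfolding density_def by blast
    have "\<forall>\<psi>\<in>{\<psi>\<in>\<Gamma>. way_below le \<psi> x}. le \<psi> s"
    proof
      fix \<psi> assume "\<psi> \<in> {\<psi>\<in>\<Gamma>. way_below le \<psi> x}"
      then have "\<psi> \<in> F" unfolding F_def using xX wb_le trans by blast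
      then show "le \<psi> s" using s unfolding is_lub_def by blast
    qed
    then show "le x s" using d unfolding is_lub_def by blast
  next
    fix u assume "\<forall>x\<in>X. le x u"
    then have "\<forall>\<psi>\<in>F. le \<psi> u" unfolding F_def by blast
    then show "le s u" using s unfolding is_lub_def by blast
  qed
  then show "has_lub le X" unfolding has_lub_def by blast
qed

lemma gamma_compact:
  assumes adm: "admissible_gen comb e \<Gamma>" and conv: "convergency comb \<Gamma>"
    and dens: "density comb \<Gamma>" and cpt: "compactness comb \<Gamma>" and phi: "\<phi> \<in> \<Gamma>"
  shows "way_below le \<phi> \<phi>"
  unfolding way_below_def
proof (intro allI impI)
  fix X s assume H: "directed le X \<and> is_lub le X s \<and> le \<phi> s"
  define Y where "Y = {\<psi>\<in>\<Gamma>. \<exists>x\<in>X. le \<psi> x}"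
  have "directed le Y"
    unfolding directed_def
  proof (intro conjI ballI)
    obtain x where "x \<in> X" using H unfolding directed_def by blast
    then have "e \<in> Y" unfolding Y_def using adm e_least unfolding admissible_gen_def by blast
    then show "Y \<noteq> {}" by blast
  next
    fix a b assume "a \<in> Y" "b \<in> Y"
    then obtain xa xb where "a \<in> \<Gamma>" "b \<in> \<Gamma>" "xa \<in> X" "xb \<in> X" "le a xa" "le b xb"
      unfolding Y_def by blast
    then obtain xc where "xc \<in> X" "le xa xc" "le xb xc" using H unfolding directed_def by blast
    then have "comb a b \<in> Y" unfolding Y_def using \<open>a \<in> \<Gamma>\<close> \<open>b \<in> \<Gamma>\<close> adm
        \<open>le a xa\<close> \<open>le b xb\<close> comb_least trans unfolding admissible_gen_def by blast
    then show "\<exists>c\<in>Y. le a c \<and> le b c" using le_comb1 le_comb2 by blast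
  qed
  moreover have "Y \<subseteq> \<Gamma>" unfolding Y_def by blast
  ultimately obtain t where t: "is_lub le Y t"
    using conv unfolding convergency_def has_lub_def by blast
  have "\<forall>x\<in>X. le x t"
  proof
    fix x assume xX: "x \<in> X"
    have d: "is_lub le {\<psi>\<in>\<Gamma>. way_below le \<psi> x} x" using dens unfolding density_def by blast
    have "\<forall>\<psi>\<in>{\<psi>\<in>\<Gamma>. way_below le \<psi> x}. le \<psi> t"
      using t xX wb_le unfolding is_lub_def Y_def by blast
    then show "le x t" using d unfolding is_lub_def by blast
  qed
  then have "le s t" using H unfolding is_lub_def by blast
  then have "le \<phi> t" using H trans by blast
  then obtain \<psi> where "\<psi> \<in> Y" "le \<phi> \<psi>"
    using cpt \<open>directed le Y\<close> \<open>Y \<subseteq> \<Gamma>\<close> t phi unfolding compactness_def by blast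
  then show "\<exists>c\<in>X. le \<phi> c" unfolding Y_def using trans by blast
qed

lemma density_from_strong:
  assumes "strong_density comb foc \<Gamma>" shows "density comb \<Gamma>"
  using assms unfolding strong_density_def density_def
  apply (intro allI)
  apply (erule_tac x=\<phi> in allE, erule_tac x=top in allE)
  by (simp add: foc_top)

lemma lub_of_UNIV_complete: "complete_lat le \<Longrightarrow> convergency comb UNIV"
  unfolding complete_lat_def convergency_def by simp

lemma adm_UNIV: "admissible_gen comb e UNIV" unfolding admissible_gen_def by simp

lemma adm_compact: "admissible_gen comb e {b. way_below le b b}"
  unfolding admissible_gen_def using e_wb compact_comb by simp

lemma part1: "continuous_IA comb e \<longleftrightarrow> continuous_lat le"
proof
  assume "continuous_IA comb e"
  then obtain \<Gamma> where adm: "admissible_gen comb e \<Gamma>" and conv: "convergency comb \<Gamma>"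
    and dens: "density comb \<Gamma>" unfolding continuous_IA_def by blast
  have "complete_lat le" using complete_from_density[OF adm conv dens] .
  moreover have "is_lub le {b. way_below le b a} a" for a
  proof (rule lub_enlarge[where A="{\<psi>\<in>\<Gamma>. way_below le \<psi> a}"])
    show "is_lub le {\<psi> \<in> \<Gamma>. way_below le \<psi> a} a" using dens unfolding density_def by blast
    show "{\<psi> \<in> \<Gamma>. way_below le \<psi> a} \<subseteq> {b. way_below le b a}" by blast
    show "\<forall>b\<in>{b. way_below le b a}. le b a" using wb_le by blast
  qed
  ultimately show "continuous_lat le" unfolding continuous_lat_def by blast
next
  assume c: "continuous_lat le"
  then have "density comb UNIV" unfolding continuous_lat_def density_def by simp
  moreover have "convergency comb UNIV" using c lub_of_UNIV_complete unfolding continuous_lat_def by blast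
  ultimately show "continuous_IA comb e" unfolding continuous_IA_def
    using adm_UNIV by blast
qed

lemma part2: "compact_IA comb e \<longleftrightarrow> algebraic_lat le"
proof
  assume "compact_IA comb e"
  then obtain \<Gamma> where adm: "admissible_gen comb e \<Gamma>" and conv: "convergency comb \<Gamma>"
    and dens: "density comb \<Gamma>" and cpt: "compactness comb \<Gamma>" unfolding compact_IA_def by blast
  have gc: "\<And>\<phi>. \<phi> \<in> \<Gamma> \<Longrightarrow> way_below le \<phi> \<phi>" using gamma_compact[OF adm conv dens cpt] .
  have "complete_lat le" using complete_from_density[OF adm conv dens] .
  moreover have "is_lub le {b. way_below le b b \<and> le b a} a" for a
  proof (rule lub_enlarge[where A="{\<psi>\<in>\<Gamma>. way_below le \<psi> a}"])
    show "is_lub le {\<psi> \<in> \<Gamma>. way_below le \<psi> a} a" using dens unfolding density_def by blast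
    show "{\<psi> \<in> \<Gamma>. way_below le \<psi> a} \<subseteq> {b. way_below le b b \<and> le b a}" using gc wb_le by blast
    show "\<forall>b\<in>{b. way_below le b b \<and> le b a}. le b a" by blast
  qed
  ultimately show "algebraic_lat le" unfolding algebraic_lat_def by blast
next
  assume alg: "algebraic_lat le"
  have eq: "{\<psi>\<in>{b. way_below le b b}. way_below le \<psi> a} = {b. way_below le b b \<and> le b a}" for a
    using wb_le wb_mono by blast
  have "density comb {b. way_below le b b}"
    unfolding density_def eq using alg unfolding algebraic_lat_def by blast
  moreover have "compactness comb {b. way_below le b b}"
    unfolding compactness_def way_below_def by blast
  moreover have "convergency comb {b. way_below le b b}"
    using alg unfolding algebraic_lat_def convergency_def complete_lat_def by blast
  ultimately show "compact_IA comb e" unfolding compact_IA_def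
    using adm_compact by blast
qed

lemma part3: "s_continuous_IA comb e foc \<longleftrightarrow>
            complete_lat le \<and>
            (\<forall>\<phi> x. is_lub le {\<psi>. \<psi> = foc \<psi> x \<and> way_below le \<psi> \<phi>} (foc \<phi> x))"
proof
  assume "s_continuous_IA comb e foc"
  then obtain \<Gamma> where adm: "admissible_gen comb e \<Gamma>" and conv: "convergency comb \<Gamma>"
    and sd: "strong_density comb foc \<Gamma>" unfolding s_continuous_IA_def by blast
  have dens: "density comb \<Gamma>" using density_from_strong[OF sd] .
  have "complete_lat le" using complete_from_density[OF adm conv dens] .
  moreover have "is_lub le {\<psi>. \<psi> = foc \<psi> x \<and> way_below le \<psi> \<phi>} (foc \<phi> x)" for \<phi> x
  proof (rule lub_enlarge[where A="{\<psi>\<in>\<Gamma>. \<psi> = foc \<psi> x \<and> way_below le \<psi> \<phi>}"])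
    show "is_lub le {\<psi>\<in>\<Gamma>. \<psi> = foc \<psi> x \<and> way_below le \<psi> \<phi>} (foc \<phi> x)"
      using sd unfolding strong_density_def by blast
    show "{\<psi>\<in>\<Gamma>. \<psi> = foc \<psi> x \<and> way_below le \<psi> \<phi>} \<subseteq> {\<psi>. \<psi> = foc \<psi> x \<and> way_below le \<psi> \<phi>}"
      by blast
    show "\<forall>b\<in>{\<psi>. \<psi> = foc \<psi> x \<and> way_below le \<psi> \<phi>}. le b (foc \<phi> x)"
    proof
      fix b assume "b \<in> {\<psi>. \<psi> = foc \<psi> x \<and> way_below le \<psi> \<phi>}"
      then have "b = foc b x" "le b \<phi>" using wb_le by auto
      then show "le b (foc \<phi> x)" using foc_mono[of b \<phi> x] by simp
    qed
  qed
  ultimately show "complete_lat le \<and>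
            (\<forall>\<phi> x. is_lub le {\<psi>. \<psi> = foc \<psi> x \<and> way_below le \<psi> \<phi>} (foc \<phi> x))" by blast
next
  assume H: "complete_lat le \<and>
            (\<forall>\<phi> x. is_lub le {\<psi>. \<psi> = foc \<psi> x \<and> way_below le \<psi> \<phi>} (foc \<phi> x))"
  then have "strong_density comb foc UNIV" unfolding strong_density_def by simp
  moreover have "convergency comb UNIV" using H lub_of_UNIV_complete by blast
  ultimately show "s_continuous_IA comb e foc" unfolding s_continuous_IA_def
    using adm_UNIV by blast
qed

lemma part4: "s_compact_IA comb e foc \<longleftrightarrow>
            complete_lat le \<and>
            (\<forall>\<phi> x. is_lub le {\<psi>. way_below le \<psi> \<psi> \<and> \<psi> = foc \<psi> x \<and> le \<psi> \<phi>} (foc \<phi> x))"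
proof
  assume "s_compact_IA comb e foc"
  then obtain \<Gamma> where adm: "admissible_gen comb e \<Gamma>" and conv: "convergency comb \<Gamma>"
    and sd: "strong_density comb foc \<Gamma>" and cpt: "compactness comb \<Gamma>"
    unfolding s_compact_IA_def by blast
  have dens: "density comb \<Gamma>" using density_from_strong[OF sd] .
  have gc: "\<And>\<phi>. \<phi> \<in> \<Gamma> \<Longrightarrow> way_below le \<phi> \<phi>" using gamma_compact[OF adm conv dens cpt] .
  have "complete_lat le" using complete_from_density[OF adm conv dens] .
  moreover have "is_lub le {\<psi>. way_below le \<psi> \<psi> \<and> \<psi> = foc \<psi> x \<and> le \<psi> \<phi>} (foc \<phi> x)" for \<phi> x
  proof (rule lub_enlarge[where A="{\<psi>\<in>\<Gamma>. \<psi> = foc \<psi> x \<and> way_below le \<psi> \<phi>}"])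
    show "is_lub le {\<psi>\<in>\<Gamma>. \<psi> = foc \<psi> x \<and> way_below le \<psi> \<phi>} (foc \<phi> x)"
      using sd unfolding strong_density_def by blast
    show "\<forall>b\<in>{\<psi>. way_below le \<psi> \<psi> \<and> \<psi> = foc \<psi> x \<and> le \<psi> \<phi>}. le b (foc \<phi> x)"
    proof
      fix b assume "b \<in> {\<psi>. way_below le \<psi> \<psi> \<and> \<psi> = foc \<psi> x \<and> le \<psi> \<phi>}"
      then have "b = foc b x" "le b \<phi>" by auto
      then show "le b (foc \<phi> x)" using foc_mono[of b \<phi> x] by simp
    qed
    show "{\<psi>\<in>\<Gamma>. \<psi> = foc \<psi> x \<and> way_below le \<psi> \<phi>} \<subseteq> {\<psi>. way_below le \<psi> \<psi> \<and> \<psi> = foc \<psi> x \<and> le \<psi> \<phi>}"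
      using gc wb_le by blast
  qed
  ultimately show "complete_lat le \<and>
            (\<forall>\<phi> x. is_lub le {\<psi>. way_below le \<psi> \<psi> \<and> \<psi> = foc \<psi> x \<and> le \<psi> \<phi>} (foc \<phi> x))" by blast
next
  assume H: "complete_lat le \<and>
            (\<forall>\<phi> x. is_lub le {\<psi>. way_below le \<psi> \<psi> \<and> \<psi> = foc \<psi> x \<and> le \<psi> \<phi>} (foc \<phi> x))"
  have eq: "{\<psi>\<in>{b. way_below le b b}. \<psi> = foc \<psi> x \<and> way_below le \<psi> \<phi>}
        = {\<psi>. way_below le \<psi> \<psi> \<and> \<psi> = foc \<psi> x \<and> le \<psi> \<phi>}" for x \<phi>
    using wb_le wb_mono by blast
  have "strong_density comb foc {b. way_below le b b}"
    unfolding strong_density_def eq using H by blast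
  moreover have "compactness comb {b. way_below le b b}"
    unfolding compactness_def way_below_def by blast
  moreover have "convergency comb {b. way_below le b b}"
    using H unfolding convergency_def complete_lat_def by blast
  ultimately show "s_compact_IA comb e foc" unfolding s_compact_IA_def
    using adm_compact by blast
qed

end

theorem theorem3p8:
  fixes comb :: "'a \<Rightarrow> 'a \<Rightarrow> 'a" and e :: 'a
    and foc :: "'a \<Rightarrow> 'd::bounded_lattice_top \<Rightarrow> 'a"
  assumes "info_algebra comb e foc"
  shows "(continuous_IA comb e \<longleftrightarrow> continuous_lat (ia_le comb))
       \<and> (compact_IA comb e \<longleftrightarrow> algebraic_lat (ia_le comb))
       \<and> (s_continuous_IA comb e foc \<longleftrightarrow>
            complete_lat (ia_le comb) \<and>
            (\<forall>\<phi> x. is_lub (ia_le comb)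
               {\<psi>. \<psi> = foc \<psi> x \<and> way_below (ia_le comb) \<psi> \<phi>} (foc \<phi> x)))
       \<and> (s_compact_IA comb e foc \<longleftrightarrow>
            complete_lat (ia_le comb) \<and>
            (\<forall>\<phi> x. is_lub (ia_le comb)
               {\<psi>. way_below (ia_le comb) \<psi> \<psi> \<and> \<psi> = foc \<psi> x \<and> ia_le comb \<psi> \<phi>} (foc \<phi> x)))"
  using IA.part1[OF IA.intro[OF assms]] IA.part2[OF IA.intro[OF assms]]
    IA.part3[OF IA.intro[OF assms]] IA.part4[OF IA.intro[OF assms]] by blast

end
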